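(* Let $f\colon\mathbb{R}^n\to\overline{\mathbb{R}}$ be a lower semicontinuous function and $M\subset\mathbb{R}^n$ a closed set on which $f$ is finite. Fix a point $\bar x\in M$ and a vector $\bar v\in\hat\partial f(\bar x)$ (so that $(\bar x,f(\bar x),\bar v)\in[\hat\partial f]\big|_M$). Suppose there is a sequence of real numbers $m_i\to\infty$ such that for each $i$, $$\bar v\in\operatorname{bd}\bigcup_{x\in M}\partial\Big(f(\cdot)+\tfrac12 m_i|\cdot-\bar x|^2\Big)(x).$$ Then $(\bar x,f(\bar x),\bar v)\in\operatorname{cl}\,[\hat\partial f]\big|_{M^c}$; that is, there exist sequences $x_i\notin M$ and $v_i\in\hat\partial f(x_i)$ such that $(x_i,f(x_i),v_i)\to(\bar x,f(\bar x),\bar v)$.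
   Context: $\overline{\mathbb{R}}=\mathbb{R}\cup\{\pm\infty\}$. For $\bar x$ with $f(\bar x)$ finite, the Fréchet subdifferential $\hat\partial f(\bar x)$ is the set of $v\in\mathbb{R}^n$ with $f(x)\ge f(\bar x)+\langle v,x-\bar x\rangle+o(|x-\bar x|)$; the limiting subdifferential $\partial g(\bar x)$ of a function $g$ is the set of $v$ for which there exist $x_i$, $v_i\in\hat\partial g(x_i)$ with $(x_i,g(x_i),v_i)\to(\bar x,g(\bar x),v)$; both are empty where the function is not finite. The Fréchet subjet is $[\hat\partial f]=\{(x,y,v): y=f(x),\ v\in\hat\partial f(x)\}$, and for $S\subset\mathbb{R}^n$, $[\hat\partial f]\big|_S=[\hat\partial f]\cap(S\times\mathbb{R}\times\mathbb{R}^n)$. $\operatorname{bd}$ and $\operatorname{cl}$ denote boundary and closure, $M^c$ the complement of $M$, and $|\cdot|$ the Euclidean norm. *)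

theory Defs
  imports "HOL-Analysis.Analysis"
begin

definition lsc :: "('a::topological_space \<Rightarrow> ereal) \<Rightarrow> bool" where
  "lsc f \<longleftrightarrow> (\<forall>x. f x \<le> Liminf (at x) f)"

definition frechet_subdiff :: "('a::euclidean_space \<Rightarrow> ereal) \<Rightarrow> 'a \<Rightarrow> 'a set" where
  "frechet_subdiff f x = {v. \<bar>f x\<bar> \<noteq> \<infinity> \<and>
     (\<forall>e>0. \<exists>d>0. \<forall>y. norm (y - x) < d \<longrightarrow>
        f y \<ge> f x + ereal (inner v (y - x) - e * norm (y - x)))}"

definition limiting_subdiff :: "('a::euclidean_space \<Rightarrow> ereal) \<Rightarrow> 'a \<Rightarrow> 'a set" where
  "limiting_subdiff g x = {v. \<bar>g x\<bar> \<noteq> \<infinity> \<and>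
     (\<exists>xs vs. (\<forall>i. vs i \<in> frechet_subdiff g (xs i)) \<and> xs \<longlonglongrightarrow> x \<and>
        (\<lambda>i. g (xs i)) \<longlonglongrightarrow> g x \<and> vs \<longlonglongrightarrow> v)}"

definition frechet_subjet :: "('a::euclidean_space \<Rightarrow> ereal) \<Rightarrow> ('a \<times> real \<times> 'a) set" where
  "frechet_subjet f = {(x, y, v). ereal y = f x \<and> v \<in> frechet_subdiff f x}"

definition frechet_subjet_on :: "('a::euclidean_space \<Rightarrow> ereal) \<Rightarrow> 'a set \<Rightarrow> ('a \<times> real \<times> 'a) set" where
  "frechet_subjet_on f S = frechet_subjet f \<inter> (S \<times> UNIV \<times> UNIV)"

end

theory Submission
  imports Defs
begin

lemma lsc_min:
  fixes h :: "'a::metric_space \<Rightarrow> ereal"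
  assumes K: "compact K" "K \<noteq> {}"
    and L: "\<And>z c. z\<in>K \<Longrightarrow> c < h z \<Longrightarrow> \<exists>d>0. \<forall>y\<in>K. dist y z < d \<longrightarrow> c < h y"
  shows "\<exists>z\<in>K. \<forall>y\<in>K. h z \<le> h y"
proof (rule ccontr)
  assume nm: "\<not> ?thesis"
  define I where "I = (INF y\<in>K. h y)"
  have lt: "\<forall>z\<in>K. I < h z"
  proof
    fix z assume "z \<in> K"
    then obtain y where "y \<in> K" "h y < h z" using nm by (meson not_le)
    moreover have "I \<le> h y" unfolding I_def using \<open>y\<in>K\<close> by (rule INF_lower)
    ultimately show "I < h z" by simp
  qed
  then have "\<forall>z\<in>K. \<exists>c. I < c \<and> c < h z" using dense by blast
  then obtain c where c: "\<forall>z\<in>K. I < c z \<and> c z < h z" by metis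
  then have "\<forall>z\<in>K. \<exists>d>0. \<forall>y\<in>K. dist y z < d \<longrightarrow> c z < h y" using L by blast
  then obtain d where d: "\<forall>z\<in>K. d z > 0 \<and> (\<forall>y\<in>K. dist y z < d z \<longrightarrow> c z < h y)" by metis
  have cov: "K \<subseteq> (\<Union>z\<in>K. ball z (d z))" using d by force
  obtain F where F: "F \<subseteq> K" "finite F" "K \<subseteq> (\<Union>z\<in>F. ball z (d z))"
    using compactE_image[OF K(1) _ cov] by blast
  have Fne: "F \<noteq> {}" using F(3) K(2) by blast
  define c0 where "c0 = Min (c ` F)"
  have "c0 \<in> c ` F" unfolding c0_def using F(2) Fne by (intro Min_in) auto
  then have Ic0: "I < c0" using c F(1) by blast
  have "\<forall>y\<in>K. c0 \<le> h y"
  proof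
    fix y assume y: "y \<in> K"
    then obtain z where z: "z \<in> F" "y \<in> ball z (d z)" using F(3) by blast
    then have "c z < h y" using d F(1) y by (auto simp: dist_commute)
    moreover have "c0 \<le> c z" unfolding c0_def using F(2) z(1) by simp
    ultimately show "c0 \<le> h y" by simp
  qed
  then have "c0 \<le> I" unfolding I_def by (simp add: INF_greatest)
  then show False using Ic0 by simp
qed

lemma norm_add_sq:
  fixes a b :: "'a::real_inner"
  shows "(norm (a + b))^2 = (norm a)^2 + 2 * inner a b + (norm b)^2"
  by (simp add: power2_norm_eq_inner inner_add_left inner_add_right inner_commute)

lemma half_expand:
  fixes a b c d k :: real
  shows "a = b + 2 * c + d \<Longrightarrow> 1/2 * k * a = 1/2 * k * b + k * c + 1/2 * k * d"
  by (simp add: algebra_simps)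

theorem lemma3p2:
  fixes f :: "'a::euclidean_space \<Rightarrow> ereal"
    and M :: "'a set" and xbar vbar :: 'a and m :: "nat \<Rightarrow> real"
  assumes "lsc f"
    and "closed M"
    and "\<forall>x\<in>M. \<bar>f x\<bar> \<noteq> \<infinity>"
    and "xbar \<in> M"
    and "vbar \<in> frechet_subdiff f xbar"
    and "filterlim m at_top sequentially"
    and "\<forall>i. vbar \<in> frontier (\<Union>x\<in>M.
            limiting_subdiff (\<lambda>z. f z + ereal (1/2 * m i * (norm (z - xbar))\<^sup>2)) x)"
  shows "(xbar, real_of_ereal (f xbar), vbar) \<in> closure (frechet_subjet_on f (- M))"
proof -
  have fa_fin: "\<bar>f xbar\<bar> \<noteq> \<infinity>" using bspec[OF assms(3) assms(4)] .
  define fa where "fa = real_of_ereal (f xbar)"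
  have fa: "f xbar = ereal fa" using fa_fin by (simp add: fa_def ereal_real)
  have lscf: "\<And>x c. c < f x \<Longrightarrow> eventually (\<lambda>y. c < f y) (at x)"
    using assms(1) le_Liminf_iff unfolding lsc_def by metis
  have vF: "\<forall>e>0. \<exists>d>0. \<forall>y. norm (y - xbar) < d \<longrightarrow>
        f y \<ge> f xbar + ereal (inner vbar (y - xbar) - e * norm (y - xbar))"
    using assms(5) by (simp add: frechet_subdiff_def)
  show ?thesis
  proof (rule closure_approachable[THEN iffD2], intro allI impI)
    fix \<epsilon> :: real assume "\<epsilon> > 0"
    define e where "e = min 1 (\<epsilon> / (20 + 4 * norm vbar))"
    have e: "e > 0" "e \<le> 1" "e * (17 + 4 * norm vbar) < \<epsilon>"
    proof -
      have p: "20 + 4 * norm vbar > 0" by (simp add: add_pos_nonneg)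
      show "e > 0" "e \<le> 1" using \<open>\<epsilon> > 0\<close> p by (auto simp: e_def)
      have "e \<le> \<epsilon> / (20 + 4 * norm vbar)" by (simp add: e_def)
      then have "e * (20 + 4 * norm vbar) \<le> \<epsilon>" using p by (simp add: le_divide_eq)
      moreover have "e * (17 + 4 * norm vbar) < e * (20 + 4 * norm vbar)" using \<open>e>0\<close> by simp
      ultimately show "e * (17 + 4 * norm vbar) < \<epsilon>" by linarith
    qed
    obtain d where d: "d > 0" and dF: "\<And>y. norm (y - xbar) < d \<Longrightarrow>
        f y \<ge> ereal (fa + inner vbar (y - xbar) - e * norm (y - xbar))"
    proof -
      obtain d where d: "d>0" and dF0: "\<forall>y. norm (y - xbar) < d \<longrightarrow>
        f xbar + ereal (inner vbar (y - xbar) - e * norm (y - xbar)) \<le> f y" using vF e(1) by blast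
      have "\<And>y. ereal (fa + inner vbar (y - xbar) - e * norm (y - xbar)) =
         f xbar + ereal (inner vbar (y - xbar) - e * norm (y - xbar))" by (simp add: fa)
      then show ?thesis using that d dF0 by metis
    qed
    define r where "r = d / 2"
    have r: "r > 0" "r < d" using d by (auto simp: r_def)
    obtain i where mi: "m i \<ge> max 1 (4 * e / r + 1)"
      using assms(6) unfolding filterlim_at_top eventually_sequentially by blast
    have m1: "m i \<ge> 1" using mi by simp
    have m4: "4 * e < m i * r"
    proof -
      have "4 * e / r < m i" using mi by simp
      then show ?thesis using r(1) by (simp add: divide_less_eq mult.commute)
    qed
    define g where "g = (\<lambda>z. f z + ereal (1/2 * m i * (norm (z - xbar))\<^sup>2))"
    define U where "U = (\<Union>x\<in>M. limiting_subdiff g x)"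
    have "vbar \<in> frontier U" using assms(7) by (simp add: U_def g_def)
    then have "vbar \<notin> interior U" by (simp add: frontier_def)
    then have "\<not> ball vbar e \<subseteq> U" using e(1) mem_interior by blast
    then obtain w where w: "dist vbar w < e" "w \<notin> U" by (auto simp: subset_eq)
    define q where "q = (\<lambda>y. 1/2 * m i * (norm (y - xbar))\<^sup>2 - inner w (y - xbar))"
    define h where "h = (\<lambda>y. f y + ereal (q y))"
    define K where "K = cball xbar r"
    have Kd: "\<And>y. y \<in> K \<Longrightarrow> norm (y - xbar) < d"
      using r by (auto simp: K_def dist_norm norm_minus_commute)
    have Kfin: "\<And>y. y \<in> K \<Longrightarrow> f y \<noteq> -\<infinity>"
    proof
      fix y assume "y \<in> K" "f y = -\<infinity>"
      with dF[OF Kd[OF \<open>y \<in> K\<close>]] show False by simp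
    qed
    have lsch: "\<exists>\<delta>>0. \<forall>y\<in>K. dist y z < \<delta> \<longrightarrow> c < h y" if zK: "z\<in>K" and c: "c < h z" for z c
    proof (cases c)
      case MInf
      have "\<forall>y\<in>K. c < h y"
      proof
        fix y assume "y\<in>K" then have "f y \<noteq> -\<infinity>" by (rule Kfin)
        then show "c < h y" using MInf by (cases "f y") (auto simp: h_def)
      qed
      then show ?thesis by (intro exI[of _ 1]) auto
    next
      case PInf then show ?thesis using c by simp
    next
      case (real c0)
      define s where "s = c0 - q z"
      have "ereal s < f z" using c real by (cases "f z") (auto simp: h_def s_def)
      then obtain t where t: "ereal s < ereal t" "ereal t < f z" using ereal_dense2 by blast
      define \<eta> where "\<eta> = t - s"
      have \<eta>: "\<eta> > 0" using t by (simp add: \<eta>_def)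
      have ev1: "eventually (\<lambda>y. ereal t < f y) (at z)" using lscf t(2) .
      have "continuous (at z) q" unfolding q_def by (intro continuous_intros)
      then have "(q \<longlongrightarrow> q z) (at z)" by (simp add: continuous_at)
      then have ev2: "eventually (\<lambda>y. dist (q y) (q z) < \<eta>) (at z)" using \<eta> by (rule tendstoD)
      have "eventually (\<lambda>y. ereal t < f y \<and> dist (q y) (q z) < \<eta>) (at z)"
        using ev1 ev2 by (rule eventually_conj)
      then obtain \<delta> where \<delta>: "\<delta> > 0" "\<forall>y. y \<noteq> z \<and> dist y z < \<delta> \<longrightarrow> ereal t < f y \<and> dist (q y) (q z) < \<eta>"
        unfolding eventually_at by auto
      show ?thesis
      proof (rule exI[of _ \<delta>], intro conjI ballI impI)
        show "\<delta> > 0" by (rule \<delta>(1))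
        fix y assume "y \<in> K" "dist y z < \<delta>"
        show "c < h y"
        proof (cases "y = z")
          case True then show ?thesis using c by simp
        next
          case False
          then have ft: "ereal t < f y" and dq: "dist (q y) (q z) < \<eta>" using \<delta> \<open>dist y z < \<delta>\<close> by auto
          have "q y > q z - \<eta>" using dq by (simp add: dist_real_def abs_less_iff)
          then show ?thesis using ft real by (cases "f y") (auto simp: h_def \<eta>_def s_def)
        qed
      qed
    qed
    obtain z where zK: "z \<in> K" and zmin: "\<forall>y\<in>K. h z \<le> h y"
      using lsc_min[of K h] lsch r(1) by (auto simp: K_def)
    have hx: "h xbar = ereal fa" by (simp add: h_def q_def fa)
    have xK: "xbar \<in> K" using r by (simp add: K_def)
    have hz: "h z \<le> ereal fa" using zmin xK hx by metis
    define \<rho> where "\<rho> = norm (z - xbar)"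
    have fzlow: "ereal (fa + inner vbar (z - xbar) - e * \<rho>) \<le> f z" using dF Kd zK \<rho>_def by blast
    obtain fz where fz: "f z = ereal fz"
    proof (cases "f z")
      case (real x) then show ?thesis using that by blast
    next
      case PInf then have "h z = \<infinity>" by (simp add: h_def)
      with hz show ?thesis by simp
    next
      case MInf with fzlow show ?thesis by simp
    qed
    have A: "fz + q z \<le> fa" using hz fz by (simp add: h_def)
    have B: "fa + inner vbar (z - xbar) - e * \<rho> \<le> fz" using fzlow fz by simp
    have qz: "q z = 1/2 * m i * \<rho>^2 - inner w (z - xbar)" by (simp add: q_def \<rho>_def)
    have cs: "inner (w - vbar) (z - xbar) \<le> norm (w - vbar) * \<rho>" unfolding \<rho>_def by (rule norm_cauchy_schwarz)
    have wv: "norm (w - vbar) < e" using w(1) by (simp add: dist_norm norm_minus_commute)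
    have \<rho>0: "\<rho> \<ge> 0" by (simp add: \<rho>_def)
    have key: "1/2 * m i * \<rho>^2 \<le> 2 * e * \<rho>"
    proof -
      have "inner (w - vbar) (z - xbar) = inner w (z - xbar) - inner vbar (z - xbar)" by (simp add: inner_diff_left)
      moreover have "norm (w - vbar) * \<rho> \<le> e * \<rho>" using wv \<rho>0 by (simp add: mult_right_mono)
      ultimately show ?thesis using A B qz cs by linarith
    qed
    have m\<rho>: "m i * \<rho> \<le> 4 * e"
    proof (cases "\<rho> = 0")
      case True then show ?thesis using e(1) by simp
    next
      case False then have "\<rho> > 0" using \<rho>0 by simp
      have "\<rho> * (m i * \<rho>) \<le> \<rho> * (4 * e)" using key by (simp add: power2_eq_square algebra_simps)
      then show ?thesis using \<open>\<rho> > 0\<close> by simp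
    qed
    have \<rho>r: "\<rho> < r"
    proof -
      have "m i * \<rho> < m i * r" using m\<rho> m4 by linarith
      then show ?thesis using m1 by (simp add: mult_less_cancel_left_pos)
    qed
    have \<rho>e: "\<rho> \<le> 4 * e" using mult_right_mono[OF m1 \<rho>0] m\<rho> by simp
    have nearK: "y \<in> K" if "norm (y - z) < r - \<rho>" for y
    proof -
      have "norm (y - xbar) \<le> norm (y - z) + norm (z - xbar)" using norm_triangle_ineq[of "y - z" "z - xbar"] by simp
      then show ?thesis using that by (simp add: K_def dist_norm norm_minus_commute \<rho>_def)
    qed
    have hmin: "ereal (fz + q z) \<le> f y + ereal (q y)" if "norm (y - z) < r - \<rho>" for y
    proof -
      have "ereal (fz + q z) = h z" by (simp add: h_def fz)
      also have "\<dots> \<le> h y" using zmin nearK[OF that] by blast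
      also have "\<dots> = f y + ereal (q y)" by (simp add: h_def)
      finally show ?thesis .
    qed
    have wg: "w \<in> frechet_subdiff g z"
      unfolding frechet_subdiff_def
    proof (intro CollectI conjI allI impI)
      show "\<bar>g z\<bar> \<noteq> \<infinity>" by (simp add: g_def fz)
      fix e' :: real assume "e' > 0"
      show "\<exists>d'>0. \<forall>y. norm (y - z) < d' \<longrightarrow> g z + ereal (inner w (y - z) - e' * norm (y - z)) \<le> g y"
      proof (rule exI[of _ "r - \<rho>"], intro conjI allI impI)
        show "r - \<rho> > 0" using \<rho>r by simp
        fix y assume y: "norm (y - z) < r - \<rho>"
        have hy: "ereal (fz + q z) \<le> f y + ereal (q y)" by (rule hmin[OF y])
        have i1: "inner w (y - z) = inner w (y - xbar) - inner w (z - xbar)" by (simp add: inner_diff_right)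
        have nn: "e' * norm (y - z) \<ge> 0" using \<open>e' > 0\<close> by simp
        have qy: "q y = 1/2 * m i * (norm (y - xbar))^2 - inner w (y - xbar)" by (simp add: q_def)
        show "g z + ereal (inner w (y - z) - e' * norm (y - z)) \<le> g y"
        proof (cases "f y")
          case (real fy)
          then have "fz + q z \<le> fy + q y" using hy by simp
          then have "fz + 1/2 * m i * \<rho>^2 + (inner w (y - z) - e' * norm (y - z)) \<le> fy + 1/2 * m i * (norm (y - xbar))^2"
            using i1 nn qy qz by linarith
          then show ?thesis using real fz by (simp add: g_def \<rho>_def)
        next
          case PInf then show ?thesis by (simp add: g_def)
        next
          case MInf then show ?thesis using Kfin[OF nearK[OF y]] by simp
        qed
      qed
    qed
    have "w \<in> limiting_subdiff g z"
      unfolding limiting_subdiff_def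
      by (rule CollectI, rule conjI, simp add: g_def fz, rule exI[of _ "\<lambda>_. z"], rule exI[of _ "\<lambda>_. w"], simp add: wg)
    then have zM: "z \<notin> M" using w(2) unfolding U_def by blast
    define u where "u = w - m i *\<^sub>R (z - xbar)"
    have uF: "u \<in> frechet_subdiff f z"
      unfolding frechet_subdiff_def
    proof (intro CollectI conjI allI impI)
      show "\<bar>f z\<bar> \<noteq> \<infinity>" by (simp add: fz)
      fix e' :: real assume "e' > 0"
      show "\<exists>d'>0. \<forall>y. norm (y - z) < d' \<longrightarrow> f z + ereal (inner u (y - z) - e' * norm (y - z)) \<le> f y"
      proof (rule exI[of _ "min (r - \<rho>) (2 * e' / m i)"], intro conjI allI impI)
        show "min (r - \<rho>) (2 * e' / m i) > 0" using \<rho>r \<open>e' > 0\<close> m1 by simp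
        fix y assume y: "norm (y - z) < min (r - \<rho>) (2 * e' / m i)"
        then have y1: "norm (y - z) < r - \<rho>" and y2: "norm (y - z) < 2 * e' / m i" by auto
        have hy: "ereal (fz + q z) \<le> f y + ereal (q y)" by (rule hmin[OF y1])
        have i1: "inner w (y - z) = inner w (y - xbar) - inner w (z - xbar)" by (simp add: inner_diff_right)
        have qy: "q y = 1/2 * m i * (norm (y - xbar))^2 - inner w (y - xbar)" by (simp add: q_def)
        have nsq: "(norm (y - xbar))^2 = \<rho>^2 + 2 * inner (z - xbar) (y - z) + (norm (y - z))^2"
        proof -
          have "(z - xbar) + (y - z) = y - xbar" by simp
          then show ?thesis using norm_add_sq[of "z - xbar" "y - z"] by (simp add: \<rho>_def)
        qed
        have nsq2: "1/2 * m i * (norm (y - xbar))^2 = 1/2 * m i * \<rho>^2 + m i * inner (z - xbar) (y - z) + 1/2 * m i * (norm (y - z))^2"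
          by (rule half_expand[OF nsq])
        have iu: "inner u (y - z) = inner w (y - z) - m i * inner (z - xbar) (y - z)"
          by (simp add: u_def inner_diff_left)
        have small: "m i * (norm (y - z))^2 \<le> 2 * e' * norm (y - z)"
        proof -
          have "norm (y - z) * m i < 2 * e'" using y2 m1 by (simp add: less_divide_eq)
          then have "m i * norm (y - z) * norm (y - z) \<le> 2 * e' * norm (y - z)"
            by (intro mult_right_mono) (auto simp: mult.commute)
          then show ?thesis by (simp add: power2_eq_square mult.assoc)
        qed
        show "f z + ereal (inner u (y - z) - e' * norm (y - z)) \<le> f y"
        proof (cases "f y")
          case (real fy)
          then have "fz + q z \<le> fy + q y" using hy by simp
          then have "fz + (inner u (y - z) - e' * norm (y - z)) \<le> fy"
            using i1 qy qz nsq2 iu small by linarith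
          then show ?thesis using real fz by simp
        next
          case PInf then show ?thesis by simp
        next
          case MInf then show ?thesis using Kfin[OF nearK[OF y1]] by simp
        qed
      qed
    qed
    have mem: "(z, fz, u) \<in> frechet_subjet_on f (- M)"
      by (simp add: frechet_subjet_on_def frechet_subjet_def fz uF zM)
    have dist1: "dist (z, fz, u) (xbar, fa, vbar) \<le> dist z xbar + (dist fz fa + dist u vbar)"
    proof -
      have "dist (z, fz, u) (xbar, fa, vbar) = sqrt ((dist z xbar)^2 + (dist (fz, u) (fa, vbar))^2)"
        by (rule dist_Pair_Pair)
      also have "\<dots> \<le> dist z xbar + dist (fz, u) (fa, vbar)" by (rule sqrt_sum_squares_le_sum) simp_all
      also have "dist (fz, u) (fa, vbar) = sqrt ((dist fz fa)^2 + (dist u vbar)^2)" by (rule dist_Pair_Pair)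
      also have "\<dots> \<le> dist fz fa + dist u vbar" by (rule sqrt_sum_squares_le_sum) simp_all
      finally show ?thesis by simp
    qed
    have dz: "dist z xbar = \<rho>" by (simp add: \<rho>_def dist_norm)
    have nw: "norm w \<le> norm vbar + e"
      using norm_triangle_ineq[of vbar "w - vbar"] wv by simp
    have du: "dist u vbar < 5 * e"
    proof -
      have "u - vbar = (w - vbar) - m i *\<^sub>R (z - xbar)" by (simp add: u_def)
      then have "norm (u - vbar) \<le> norm (w - vbar) + norm (m i *\<^sub>R (z - xbar))"
        by (metis norm_triangle_ineq4)
      also have "norm (m i *\<^sub>R (z - xbar)) = m i * \<rho>" using m1 by (simp add: \<rho>_def)
      finally show ?thesis using wv m\<rho> by (simp add: dist_norm)
    qed
    have df: "dist fz fa \<le> 4 * (e * norm vbar) + 4 * e"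
    proof -
      have c1: "inner w (z - xbar) \<le> norm w * \<rho>" unfolding \<rho>_def by (rule norm_cauchy_schwarz)
      have c2: "\<bar>inner vbar (z - xbar)\<bar> \<le> norm vbar * \<rho>" unfolding \<rho>_def by (rule Cauchy_Schwarz_ineq2)
      have c3: "norm w * \<rho> \<le> (norm vbar + e) * \<rho>" using nw \<rho>0 by (rule mult_right_mono)
      have sq: "1/2 * m i * \<rho>^2 \<ge> 0" using m1 by simp
      have "\<bar>fz - fa\<bar> \<le> (norm vbar + e) * \<rho>"
        using A B qz c1 c2 c3 sq by (simp add: algebra_simps abs_le_iff)
      also have "\<dots> \<le> (norm vbar + 1) * (4 * e)" using e(2) \<rho>e \<rho>0 by (intro mult_mono) auto
      finally show ?thesis by (simp add: dist_real_def algebra_simps)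
    qed
    have "e * (17 + 4 * norm vbar) = 17 * e + 4 * (e * norm vbar)" by (simp add: algebra_simps)
    then have "dist (z, fz, u) (xbar, fa, vbar) < \<epsilon>"
      using dist1 dz \<rho>e du df e(1) e(3) by linarith
    then show "\<exists>y\<in>frechet_subjet_on f (- M). dist y (xbar, real_of_ereal (f xbar), vbar) < \<epsilon>"
      using mem unfolding fa_def[symmetric] by blast
  qed
qed

end
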